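(* Let $R$ be a finite commutative ring. Then $R$ is an avoidance ring if and only if $R$ is a principal ideal ring.
   Context: All rings are commutative with $1\neq 0$. An ideal $I$ of a ring $R$ has avoidance if whenever $I_1,\ldots,I_n$ are finitely many ideals of $R$ with $I\subseteq\bigcup_{k=1}^n I_k$, then $I\subseteq I_k$ for some $k$. A ring is an avoidance ring if every ideal of it has avoidance. *)

theory Defs
  imports "HOL-Algebra.Ideal"
begin

definition has_avoidance :: "'a set \<Rightarrow> ('a, 'b) ring_scheme \<Rightarrow> bool" where
  "has_avoidance I R \<longleftrightarrow>
     (\<forall>F. finite F \<and> (\<forall>J\<in>F. ideal J R) \<and> I \<subseteq> \<Union>F \<longrightarrow> (\<exists>J\<in>F. I \<subseteq> J))"

definition avoidance_ring :: "('a, 'b) ring_scheme \<Rightarrow> bool" where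
  "avoidance_ring R \<longleftrightarrow> (\<forall>I. ideal I R \<longrightarrow> has_avoidance I R)"

definition principal_ideal_ring :: "('a, 'b) ring_scheme \<Rightarrow> bool" where
  "principal_ideal_ring R \<longleftrightarrow> (\<forall>I. ideal I R \<longrightarrow> principalideal I R)"

end

theory Submission
  imports Defs
begin

theorem proposition3p17:
  fixes R :: "('a, 'b) ring_scheme"
  assumes "cring R" and "\<one>\<^bsub>R\<^esub> \<noteq> \<zero>\<^bsub>R\<^esub>" and "finite (carrier R)"
  shows "avoidance_ring R \<longleftrightarrow> principal_ideal_ring R"
proof
  interpret cring R by fact
  assume av: "avoidance_ring R"
  show "principal_ideal_ring R"
    unfolding principal_ideal_ring_def
  proof (intro allI impI)
    fix I assume I: "ideal I R"
    have sub: "I \<subseteq> carrier R" using I by (simp add: ideal.Icarr subsetI)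
    define F where "F = (\<lambda>a. Idl\<^bsub>R\<^esub> {a}) ` I"
    have fin: "finite F" unfolding F_def
      using assms(3) sub finite_subset by blast
    have idl: "\<forall>J\<in>F. ideal J R" unfolding F_def
      using sub genideal_ideal by auto
    have cov: "I \<subseteq> \<Union>F" unfolding F_def
      using sub genideal_self' by blast
    from av I fin idl cov obtain J where "J \<in> F" "I \<subseteq> J"
      unfolding avoidance_ring_def has_avoidance_def by blast
    then obtain a where a: "a \<in> I" "I \<subseteq> Idl\<^bsub>R\<^esub> {a}" unfolding F_def by blast
    have "Idl\<^bsub>R\<^esub> {a} \<subseteq> I" using I a(1) genideal_minimal by auto
    with a have "I = Idl\<^bsub>R\<^esub> {a}" by blast
    then show "principalideal I R"
      using I a(1) sub by (intro principalidealI) auto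
  qed
next
  interpret cring R by fact
  assume pir: "principal_ideal_ring R"
  show "avoidance_ring R"
    unfolding avoidance_ring_def has_avoidance_def
  proof (intro allI impI)
    fix I F assume I: "ideal I R" and H: "finite F \<and> (\<forall>J\<in>F. ideal J R) \<and> I \<subseteq> \<Union>F"
    from pir I obtain a where a: "a \<in> carrier R" "I = Idl\<^bsub>R\<^esub> {a}"
      unfolding principal_ideal_ring_def principalideal_def principalideal_axioms_def by blast
    have "a \<in> I" using a genideal_self' by simp
    with H obtain J where J: "J \<in> F" "a \<in> J" by blast
    have "Idl\<^bsub>R\<^esub> {a} \<subseteq> J" using H J genideal_minimal by auto
    with a J show "\<exists>J\<in>F. I \<subseteq> J" by blast
  qed
qed

end
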